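(* Let $\mathcal D=(A,D)$ be a dependence alphabet, $\mathcal P=(Q,\Delta)$ a saturated trace-pushdown system, and $c,d$ configurations of $\mathcal P$ with $c\vdash^*_{\mathcal P}d$. Then there exist $m\le\mathrm{TI}(\mathcal D)$ and a sequence $\overline T=(T_1,\ldots,T_m)$ of twin classes $T_i\in\mathrm{twins}(\mathcal D)$ such that $(c,d)\in\ \Vdash_{\overline T}\circ\vdash_\varepsilon^*$.
   Context: A dependence alphabet is $\mathcal D=(A,D)$, $A$ finite, $D\subseteq A\times A$ reflexive and symmetric. $D(B)=\{c\mid\exists b\in B:(b,c)\in D\}$, $D(a)=D(\{a\})$, $D(w)=D(\text{letters of }w)$. Letters $a,b$ independent if $(a,b)\notin D$; $u\parallel v$ if every letter of $u$ is independent of every letter of $v$. $\sim$ is the least congruence on $A^*$ with $ab\sim ba$ for independent $a,b$; $\mathbb M(\mathcal D)=A^*/{\sim}$, $[w]$ the class of $w$. $\mathrm{twins}(a)=\{b\mid D(b)=D(a)\}$, $\mathrm{twins}(\mathcal D)=\{\mathrm{twins}(a)\mid a\in A\}$, $\mathrm{TI}(\mathcal D)=|\mathrm{twins}(\mathcal D)|$. A pushdown system $\mathcal P=(Q,\Delta)$, $Q$ finite, $\Delta\subseteq Q\times A\times A^*\times Q$ finite; configurations $Q\times\mathbb M(\mathcal D)$; $(p,s)\vdash_{\mathcal P}(q,t)$ iff there are $(p,a,w,q)\in\Delta$, $x\in A^*$ with $s=[ax]$, $t=[wx]$. It is a trace-pushdown system if (P1) $D(w)\subseteq D(a)$ for all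 $(p,a,w,q)\in\Delta$ and (P2') whenever $(p,a,v,q),(q,b,w,r)\in\Delta$ with $av\parallel bw$ there is $q'$ with $(p,b,w,q'),(q',a,v,r)\in\Delta$. It is saturated if $(p,a,ubv,q),(q,b,\varepsilon,r)\in\Delta$ with $b\in A$, $u,v\in A^*$, $u\parallel b$ implies $(p,a,uv,r)\in\Delta$. Let $\Delta_\varepsilon=\Delta\cap(Q\times A\times\{\varepsilon\}\times Q)$ and, for $T\in\mathrm{twins}(\mathcal D)$, $\Delta_T=\Delta\cap(Q\times T\times A^+\times Q)$; $\vdash_\varepsilon$ and $\vdash_T$ are the one-step relations of $(Q,\Delta_\varepsilon)$ and $(Q,\Delta_T)$. Relations are composed left to right ($R_1\circ R_2=\{(x,z)\mid\exists y:(x,y)\in R_1,(y,z)\in R_2\}$). Define $\Vdash_T=\vdash_\varepsilon^*\circ\vdash_T^+$ and $\Vdash_{(T_1,\ldots,T_m)}=\Vdash_{T_1}\circ\cdots\circ\Vdash_{T_m}$ (the identity relation if $m=0$). *)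

theory Defs
  imports Main
begin

definition dep_alphabet :: "'a set \<Rightarrow> ('a \<times> 'a) set \<Rightarrow> bool" where
  "dep_alphabet A D \<longleftrightarrow> finite A \<and> D \<subseteq> A \<times> A \<and> (\<forall>a\<in>A. (a, a) \<in> D) \<and> sym D"

definition Dset :: "('a \<times> 'a) set \<Rightarrow> 'a set \<Rightarrow> 'a set" where
  "Dset D B = {c. \<exists>b\<in>B. (b, c) \<in> D}"

definition indep_words :: "('a \<times> 'a) set \<Rightarrow> 'a list \<Rightarrow> 'a list \<Rightarrow> bool" where
  "indep_words D u v \<longleftrightarrow> (\<forall>a\<in>set u. \<forall>b\<in>set v. (a, b) \<notin> D)"

definition swap_rel :: "('a \<times> 'a) set \<Rightarrow> ('a list \<times> 'a list) set" where
  "swap_rel D = {(u @ [a, b] @ v, u @ [b, a] @ v) | u a b v. (a, b) \<notin> D}"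

definition trace_eq :: "('a \<times> 'a) set \<Rightarrow> ('a list \<times> 'a list) set" where
  "trace_eq D = (swap_rel D \<union> (swap_rel D)\<inverse>)\<^sup>*"

definition tr :: "('a \<times> 'a) set \<Rightarrow> 'a list \<Rightarrow> 'a list set" where
  "tr D w = {v. (w, v) \<in> trace_eq D}"

definition traces :: "'a set \<Rightarrow> ('a \<times> 'a) set \<Rightarrow> 'a list set set" where
  "traces A D = tr D ` lists A"

definition twins :: "'a set \<Rightarrow> ('a \<times> 'a) set \<Rightarrow> 'a \<Rightarrow> 'a set" where
  "twins A D a = {b \<in> A. Dset D {b} = Dset D {a}}"

definition twin_classes :: "'a set \<Rightarrow> ('a \<times> 'a) set \<Rightarrow> 'a set set" where
  "twin_classes A D = twins A D ` A"

definition TI :: "'a set \<Rightarrow> ('a \<times> 'a) set \<Rightarrow> nat" where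
  "TI A D = card (twin_classes A D)"

definition pds :: "'a set \<Rightarrow> 'q set \<Rightarrow> ('q \<times> 'a \<times> 'a list \<times> 'q) set \<Rightarrow> bool" where
  "pds A Q \<Delta> \<longleftrightarrow> finite Q \<and> finite \<Delta> \<and> \<Delta> \<subseteq> Q \<times> A \<times> lists A \<times> Q"

definition step :: "'a set \<Rightarrow> ('a \<times> 'a) set \<Rightarrow> ('q \<times> 'a \<times> 'a list \<times> 'q) set
    \<Rightarrow> (('q \<times> 'a list set) \<times> ('q \<times> 'a list set)) set" where
  "step A D \<Delta> = {((p, s), (q, t)) | p s q t. \<exists>a w x. (p, a, w, q) \<in> \<Delta> \<and> x \<in> lists A
      \<and> s = tr D (a # x) \<and> t = tr D (w @ x)}"

definition trace_pds :: "'a set \<Rightarrow> ('a \<times> 'a) set \<Rightarrow> 'q set \<Rightarrow> ('q \<times> 'a \<times> 'a list \<times> 'q) set \<Rightarrow> bool" where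
  "trace_pds A D Q \<Delta> \<longleftrightarrow> pds A Q \<Delta>
    \<and> (\<forall>p a w q. (p, a, w, q) \<in> \<Delta> \<longrightarrow> Dset D (set w) \<subseteq> Dset D {a})
    \<and> (\<forall>p a v q b w r. (p, a, v, q) \<in> \<Delta> \<and> (q, b, w, r) \<in> \<Delta> \<and> indep_words D (a # v) (b # w)
         \<longrightarrow> (\<exists>q'. (p, b, w, q') \<in> \<Delta> \<and> (q', a, v, r) \<in> \<Delta>))"

definition saturated :: "'a set \<Rightarrow> ('a \<times> 'a) set \<Rightarrow> ('q \<times> 'a \<times> 'a list \<times> 'q) set \<Rightarrow> bool" where
  "saturated A D \<Delta> \<longleftrightarrow> (\<forall>p a u b v q r. (p, a, u @ [b] @ v, q) \<in> \<Delta> \<and> (q, b, [], r) \<in> \<Delta>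
     \<and> b \<in> A \<and> u \<in> lists A \<and> v \<in> lists A \<and> indep_words D u [b] \<longrightarrow> (p, a, u @ v, r) \<in> \<Delta>)"

definition Delta_eps :: "('q \<times> 'a \<times> 'a list \<times> 'q) set \<Rightarrow> ('q \<times> 'a \<times> 'a list \<times> 'q) set" where
  "Delta_eps \<Delta> = {(p, a, w, q) \<in> \<Delta>. w = []}"

definition Delta_T :: "('q \<times> 'a \<times> 'a list \<times> 'q) set \<Rightarrow> 'a set \<Rightarrow> ('q \<times> 'a \<times> 'a list \<times> 'q) set" where
  "Delta_T \<Delta> T = {(p, a, w, q) \<in> \<Delta>. a \<in> T \<and> w \<noteq> []}"

definition VdashT :: "'a set \<Rightarrow> ('a \<times> 'a) set \<Rightarrow> ('q \<times> 'a \<times> 'a list \<times> 'q) set \<Rightarrow> 'a set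
    \<Rightarrow> (('q \<times> 'a list set) \<times> ('q \<times> 'a list set)) set" where
  "VdashT A D \<Delta> T = (step A D (Delta_eps \<Delta>))\<^sup>* O (step A D (Delta_T \<Delta> T))\<^sup>+"

fun VdashSeq :: "'a set \<Rightarrow> ('a \<times> 'a) set \<Rightarrow> ('q \<times> 'a \<times> 'a list \<times> 'q) set \<Rightarrow> 'a set list
    \<Rightarrow> (('q \<times> 'a list set) \<times> ('q \<times> 'a list set)) set" where
  "VdashSeq A D \<Delta> [] = Id"
| "VdashSeq A D \<Delta> (T # Ts) = VdashT A D \<Delta> T O VdashSeq A D \<Delta> Ts"

end

theory Submission
  imports Defs
begin

lemma split4:
  "u @ c # d # v = U @ b # R \<Longrightarrow>
   (\<exists>U2. U = u @ c # d # U2 \<and> v = U2 @ b # R) \<or> (U = u @ [c] \<and> b = d \<and> R = v) \<or>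
   (U = u \<and> b = c \<and> R = d # v) \<or> (\<exists>u2. u = U @ b # u2 \<and> R = u2 @ c # d # v)"
proof (induction u arbitrary: U)
  case Nil
  then show ?case
    by (cases U; cases "tl U"; auto)
next
  case (Cons x u)
  show ?case
  proof (cases U)
    case Nil
    then show ?thesis using Cons.prems by auto
  next
    case (Cons y U')
    with Cons.prems have "x = y" "u @ c # d # v = U' @ b # R" by auto
    from Cons.IH[OF this(2)] show ?thesis using \<open>x = y\<close> Cons by auto
  qed
qed

locale symD =
  fixes D :: "('a \<times> 'a) set"
  assumes sD: "sym D"
begin

abbreviation teq (infix "\<approx>" 50) where "u \<approx> v \<equiv> (u, v) \<in> trace_eq D"

definition ind :: "'a list \<Rightarrow> 'a list \<Rightarrow> bool" where
  "ind u v \<longleftrightarrow> (\<forall>x\<in>set u. \<forall>y\<in>set v. (x, y) \<notin> D)"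

lemma ind_sym: "ind u v \<longleftrightarrow> ind v u"
  using sD unfolding ind_def sym_def by blast

lemma swap_rel_sym: "(u, v) \<in> swap_rel D \<Longrightarrow> (v, u) \<in> swap_rel D"
  using sD unfolding swap_rel_def sym_def by blast

lemma trace_eq_alt: "trace_eq D = (swap_rel D)\<^sup>*"
proof -
  have "swap_rel D \<union> (swap_rel D)\<inverse> = swap_rel D" using swap_rel_sym by auto
  then show ?thesis unfolding trace_eq_def by simp
qed

lemma teq_refl[simp]: "u \<approx> u" unfolding trace_eq_def by simp

lemma teq_trans[trans]: "u \<approx> v \<Longrightarrow> v \<approx> w \<Longrightarrow> u \<approx> w"
  unfolding trace_eq_def by (rule rtrancl_trans)

lemma teq_sym: "u \<approx> v \<Longrightarrow> v \<approx> u"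
proof -
  have "sym (trace_eq D)" unfolding trace_eq_def
    by (simp add: sym_Un_converse sym_rtrancl)
  then show "u \<approx> v \<Longrightarrow> v \<approx> u" by (meson symD)
qed

lemma swapI: "(a, b) \<notin> D \<Longrightarrow> (x @ [a, b] @ y, x @ [b, a] @ y) \<in> swap_rel D"
  unfolding swap_rel_def by blast

lemma swap_cong: "(u, v) \<in> swap_rel D \<Longrightarrow> (x @ u @ y, x @ v @ y) \<in> swap_rel D"
proof -
  assume "(u, v) \<in> swap_rel D"
  then obtain x0 a b y0 where h: "u = x0 @ [a, b] @ y0" "v = x0 @ [b, a] @ y0" "(a, b) \<notin> D"
    unfolding swap_rel_def by blast
  have "((x @ x0) @ [a, b] @ (y0 @ y), (x @ x0) @ [b, a] @ (y0 @ y)) \<in> swap_rel D"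
    using h(3) by (rule swapI)
  then show ?thesis using h by simp
qed

lemma teq_cong: "u \<approx> v \<Longrightarrow> x @ u @ y \<approx> x @ v @ y"
  unfolding trace_eq_alt
proof (induction rule: rtrancl_induct)
  case base then show ?case by simp
next
  case (step v w)
  then show ?case using swap_cong by (meson rtrancl.rtrancl_into_rtrancl)
qed

lemma teq_app: "u \<approx> v \<Longrightarrow> x \<approx> y \<Longrightarrow> u @ x \<approx> v @ y"
proof -
  assume "u \<approx> v" "x \<approx> y"
  have "u @ x \<approx> v @ x" using teq_cong[OF \<open>u \<approx> v\<close>, of "[]" x] by simp
  also have "v @ x \<approx> v @ y" using teq_cong[OF \<open>x \<approx> y\<close>, of v "[]"] by simp
  finally show ?thesis .
qed

lemma teq_Cons: "x \<approx> y \<Longrightarrow> a # x \<approx> a # y"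
  using teq_cong[of x y "[a]" "[]"] by simp

lemma teq_set: "u \<approx> v \<Longrightarrow> set u = set v"
  unfolding trace_eq_alt
proof (induction rule: rtrancl_induct)
  case base then show ?case by simp
next
  case (step v w)
  from step(2) obtain x a b y where "v = x @ [a, b] @ y" "w = x @ [b, a] @ y"
    unfolding swap_rel_def by blast
  then show ?case using step(3) by auto
qed

lemma teq_Nil: "u \<approx> [] \<Longrightarrow> u = []"
  using teq_set by fastforce

lemma tr_eq_iff: "tr D u = tr D v \<longleftrightarrow> u \<approx> v"
proof
  assume "tr D u = tr D v"
  then have "v \<in> tr D u" unfolding tr_def by auto
  then show "u \<approx> v" unfolding tr_def by auto
next
  assume "u \<approx> v"
  then show "tr D u = tr D v" unfolding tr_def
    using teq_sym teq_trans by blast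
qed

lemma move_front: "ind U [b] \<Longrightarrow> U @ b # R \<approx> b # U @ R"
proof (induction U arbitrary: R rule: rev_induct)
  case Nil then show ?case by simp
next
  case (snoc c U)
  have "(c, b) \<notin> D" using snoc.prems unfolding ind_def by auto
  then have "(U @ [c, b] @ R, U @ [b, c] @ R) \<in> swap_rel D" unfolding swap_rel_def by blast
  then have "(U @ [c]) @ b # R \<approx> U @ b # c # R" unfolding trace_eq_alt by auto
  also have "U @ b # c # R \<approx> b # U @ c # R"
    using snoc.IH[of "c # R"] snoc.prems unfolding ind_def by auto
  finally show ?case by simp
qed

lemma first_letter_if: "ind U [b] \<Longrightarrow> y \<approx> U @ R \<Longrightarrow> b # y \<approx> U @ b # R"
  using move_front teq_Cons teq_sym teq_trans by metis

lemma first_letter: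
  assumes "b # y \<approx> z"
  shows "\<exists>U R. z = U @ b # R \<and> ind U [b] \<and> y \<approx> U @ R"
  using assms unfolding trace_eq_alt
proof (induction rule: rtrancl_induct)
  case base
  have "b # y = [] @ b # y \<and> ind [] [b] \<and> y \<approx> [] @ y" by (simp add: ind_def)
  then show ?case unfolding trace_eq_alt by blast
next
  case (step z z')
  then obtain U R where z: "z = U @ b # R" "ind U [b]" "y \<approx> U @ R" unfolding trace_eq_alt by blast
  from step(2) obtain u c d v where sw: "z = u @ [c, d] @ v" "z' = u @ [d, c] @ v" "(c, d) \<notin> D"
    unfolding swap_rel_def by blast
  have "u @ c # d # v = U @ b # R" using sw z by simp
  from split4[OF this] have "\<exists>U R. z' = U @ b # R \<and> ind U [b] \<and> y \<approx> U @ R"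
  proof (elim disjE exE conjE)
    fix U2 assume h: "U = u @ c # d # U2" "v = U2 @ b # R"
    have "(u @ [c,d] @ U2 @ R, u @ [d,c] @ U2 @ R) \<in> swap_rel D" using sw(3) unfolding swap_rel_def by blast
    then have "U @ R \<approx> (u @ [d,c] @ U2) @ R" using h unfolding trace_eq_alt by simp
    then have "y \<approx> (u @ [d,c] @ U2) @ R" using z(3) teq_trans by blast
    moreover have "ind (u @ [d,c] @ U2) [b]" using z(2) h unfolding ind_def by simp
    moreover have "z' = (u @ [d,c] @ U2) @ b # R" using sw h by simp
    ultimately show ?thesis by blast
  next
    assume h: "U = u @ [c]" "b = d" "R = v"
    have "z' = u @ b # (c # R)" using sw h by simp
    moreover have "ind u [b]" using z(2) h unfolding ind_def by simp
    moreover have "y \<approx> u @ (c # R)" using z(3) h by simp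
    ultimately show ?thesis by blast
  next
    assume h: "U = u" "b = c" "R = d # v"
    have "(d, b) \<notin> D" using sw(3) h sD unfolding sym_def by blast
    have "z' = (U @ [d]) @ b # v" using sw h by simp
    moreover have "ind (U @ [d]) [b]" using z(2) \<open>(d, b) \<notin> D\<close> unfolding ind_def by simp
    moreover have "y \<approx> (U @ [d]) @ v" using z(3) h by simp
    ultimately show ?thesis by blast
  next
    fix u2 assume h: "u = U @ b # u2" "R = u2 @ c # d # v"
    have "((U @ u2) @ [c,d] @ v, (U @ u2) @ [d,c] @ v) \<in> swap_rel D" using sw(3) by (rule swapI)
    then have "U @ R \<approx> U @ (u2 @ [d,c] @ v)" using h unfolding trace_eq_alt by auto
    then have "y \<approx> U @ (u2 @ [d,c] @ v)" using z(3) teq_trans by blast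
    moreover have "z' = U @ b # (u2 @ [d,c] @ v)" using sw h by simp
    ultimately show ?thesis using z(2) by blast
  qed
  then show ?case unfolding trace_eq_alt .
qed

lemma ind_commute: "ind u v \<Longrightarrow> u @ v \<approx> v @ u"
proof (induction v arbitrary: u)
  case Nil then show ?case by simp
next
  case (Cons b v)
  have "ind u [b]" using Cons.prems unfolding ind_def by auto
  then have "u @ b # v \<approx> b # u @ v" by (rule move_front)
  also have "b # u @ v \<approx> b # v @ u" using Cons unfolding ind_def by (auto intro: teq_Cons)
  finally show ?case by simp
qed

end

lemma split2:
  "t @ r = U @ b # R \<Longrightarrow> (\<exists>t2. t = U @ b # t2 \<and> R = t2 @ r) \<or> (\<exists>U2. U = t @ U2 \<and> r = U2 @ b # R)"
proof -
  assume "t @ r = U @ b # R"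
  then obtain us where "(t = U @ us \<and> us @ r = b # R) \<or> (t @ us = U \<and> r = us @ b # R)"
    unfolding append_eq_append_conv2 by blast
  then show ?thesis
  proof
    assume h: "t = U @ us \<and> us @ r = b # R"
    show ?thesis
    proof (cases us)
      case Nil then show ?thesis using h by auto
    next
      case (Cons c us') then show ?thesis using h by auto
    qed
  qed blast
qed

type_synonym ('q, 'a) trans = "'q \<times> 'a \<times> 'a list \<times> 'q"
type_synonym ('q, 'a) conf = "'q \<times> 'a list set"

locale tpds = symD D for D :: "('a \<times> 'a) set" +
  fixes A :: "'a set" and Q :: "'q set" and \<Delta> :: "('q, 'a) trans set"
  assumes dep: "dep_alphabet A D" and tp: "trace_pds A D Q \<Delta>" and sat: "saturated A D \<Delta>"
begin

abbreviation Dl :: "'a \<Rightarrow> 'a set" where "Dl x \<equiv> Dset D {x}"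

lemma DA: "(x, y) \<in> D \<Longrightarrow> x \<in> A \<and> y \<in> A"
  using dep unfolding dep_alphabet_def by auto

lemma reflD: "x \<in> A \<Longrightarrow> (x, x) \<in> D"
  using dep unfolding dep_alphabet_def by auto

lemma DeltaA: "(p, a, w, q) \<in> \<Delta> \<Longrightarrow> a \<in> A \<and> w \<in> lists A \<and> p \<in> Q \<and> q \<in> Q"
  using tp unfolding trace_pds_def pds_def by auto

lemma tpP1: "\<forall>p a w q. (p, a, w, q) \<in> \<Delta> \<longrightarrow> Dset D (set w) \<subseteq> Dset D {a}"
  using tp unfolding trace_pds_def by (elim conjE) assumption

lemma tpP2: "\<forall>p a v q b w r. (p, a, v, q) \<in> \<Delta> \<and> (q, b, w, r) \<in> \<Delta> \<and> indep_words D (a # v) (b # w)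
         \<longrightarrow> (\<exists>q'. (p, b, w, q') \<in> \<Delta> \<and> (q', a, v, r) \<in> \<Delta>)"
  using tp unfolding trace_pds_def by (elim conjE) assumption

lemma P1w: "(p, a, w, q) \<in> \<Delta> \<Longrightarrow> Dset D (set w) \<subseteq> Dl a"
  using tpP1 by blast

lemma P1: "(p, a, w, q) \<in> \<Delta> \<Longrightarrow> z \<in> set w \<Longrightarrow> Dl z \<subseteq> Dl a"
proof -
  assume "(p, a, w, q) \<in> \<Delta>" "z \<in> set w"
  moreover have "Dl z \<subseteq> Dset D (set w)" using \<open>z \<in> set w\<close> unfolding Dset_def by blast
  ultimately show ?thesis using P1w by blast
qed

lemma P1': "(p, a, w, q) \<in> \<Delta> \<Longrightarrow> z \<in> set w \<Longrightarrow> (z, y) \<in> D \<Longrightarrow> (a, y) \<in> D"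
proof -
  assume h: "(p, a, w, q) \<in> \<Delta>" "z \<in> set w" "(z, y) \<in> D"
  then have "y \<in> Dl z" unfolding Dset_def by blast
  then have "y \<in> Dl a" using P1[OF h(1,2)] by blast
  then show ?thesis unfolding Dset_def by blast
qed

lemma out_ind: "(p, b, w, q) \<in> \<Delta> \<Longrightarrow> ind t [b] \<Longrightarrow> ind w t"
  unfolding ind_def
proof (intro ballI)
  fix x y assume h: "(p, b, w, q) \<in> \<Delta>" "\<forall>x\<in>set t. \<forall>y\<in>set [b]. (x, y) \<notin> D" "x \<in> set w" "y \<in> set t"
  show "(x, y) \<notin> D"
  proof
    assume "(x, y) \<in> D"
    then have "(b, y) \<in> D" using P1'[OF h(1) h(3)] by blast
    then have "(y, b) \<in> D" using sD unfolding sym_def by blast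
    then show False using h(2) h(4) by simp
  qed
qed

lemma P2: "(p, a, v, q) \<in> \<Delta> \<Longrightarrow> (q, b, w, r) \<in> \<Delta> \<Longrightarrow> ind (a # v) (b # w)
   \<Longrightarrow> \<exists>q'. (p, b, w, q') \<in> \<Delta> \<and> (q', a, v, r) \<in> \<Delta>"
  using tpP2 unfolding indep_words_def ind_def by blast

lemma SAT: "(p, a, u @ b # v, q) \<in> \<Delta> \<Longrightarrow> (q, b, [], r) \<in> \<Delta> \<Longrightarrow> ind u [b] \<Longrightarrow> (p, a, u @ v, r) \<in> \<Delta>"
proof -
  assume h: "(p, a, u @ b # v, q) \<in> \<Delta>" "(q, b, [], r) \<in> \<Delta>" "ind u [b]"
  have l: "u \<in> lists A" "b \<in> A" "v \<in> lists A" using DeltaA[OF h(1)] by auto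
  have i: "\<forall>x\<in>set u. \<forall>y\<in>set [b]. (x, y) \<notin> D" using h(3) unfolding ind_def .
  show ?thesis
    using sat[unfolded saturated_def indep_words_def, rule_format, of p a u b v q r] h(1,2) l i by simp
qed

definition ostep :: "('q, 'a) trans \<Rightarrow> ('q, 'a) conf \<Rightarrow> ('q, 'a) conf \<Rightarrow> bool" where
  "ostep \<tau> c c' \<longleftrightarrow> (\<exists>p a w q x. \<tau> = (p, a, w, q) \<and> \<tau> \<in> \<Delta> \<and> x \<in> lists A
      \<and> c = (p, tr D (a # x)) \<and> c' = (q, tr D (w @ x)))"

lemma ostepI: "(p, a, w, q) \<in> \<Delta> \<Longrightarrow> x \<in> lists A \<Longrightarrow> u \<approx> a # x \<Longrightarrow> y \<approx> w @ x
   \<Longrightarrow> ostep (p, a, w, q) (p, tr D u) (q, tr D y)"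
  unfolding ostep_def using tr_eq_iff by blast

lemma ostepE:
  assumes "ostep (p, a, w, q) (p0, tr D u) c'" "u \<in> lists A"
  obtains x where "p0 = p" "(p, a, w, q) \<in> \<Delta>" "x \<in> lists A" "u \<approx> a # x" "c' = (q, tr D (w @ x))"
  using assms unfolding ostep_def using tr_eq_iff by auto

inductive path :: "('q, 'a) conf \<Rightarrow> ('q, 'a) trans list \<Rightarrow> ('q, 'a) conf \<Rightarrow> bool" where
  pnil: "path c [] c"
| pcons: "ostep \<tau> c c' \<Longrightarrow> path c' \<tau>s d \<Longrightarrow> path c (\<tau> # \<tau>s) d"

lemma path_NilD: "path c [] d \<Longrightarrow> c = d"
  by (erule path.cases) blast+

lemma path_Nil[simp]: "path c [] d \<longleftrightarrow> c = d"
proof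
  assume "path c [] d" then show "c = d" by (rule path_NilD)
next
  assume "c = d" then show "path c [] d" by (simp add: pnil)
qed

lemma path_ConsD: "path c (\<tau> # \<tau>s) d \<Longrightarrow> \<exists>c'. ostep \<tau> c c' \<and> path c' \<tau>s d"
  by (erule path.cases) blast+

lemma path_Cons: "path c (\<tau> # \<tau>s) d \<longleftrightarrow> (\<exists>c'. ostep \<tau> c c' \<and> path c' \<tau>s d)"
proof
  assume "path c (\<tau> # \<tau>s) d" then show "\<exists>c'. ostep \<tau> c c' \<and> path c' \<tau>s d" by (rule path_ConsD)
next
  assume "\<exists>c'. ostep \<tau> c c' \<and> path c' \<tau>s d"
  then obtain c' where "ostep \<tau> c c'" "path c' \<tau>s d" by blast
  then show "path c (\<tau> # \<tau>s) d" by (rule pcons)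
qed

lemma path_single: "path c [\<tau>] d \<longleftrightarrow> ostep \<tau> c d"
proof
  assume "path c [\<tau>] d"
  then obtain c' where "ostep \<tau> c c'" "path c' [] d" using path_ConsD by blast
  then show "ostep \<tau> c d" using path_NilD by simp
next
  assume "ostep \<tau> c d" then show "path c [\<tau>] d" using pcons pnil by blast
qed

lemma path_append: "path c (xs @ ys) d \<longleftrightarrow> (\<exists>c'. path c xs c' \<and> path c' ys d)"
proof (induction xs arbitrary: c)
  case Nil then show ?case by simp
next
  case (Cons x xs)
  have "path c ((x # xs) @ ys) d \<longleftrightarrow> (\<exists>c1. ostep x c c1 \<and> path c1 (xs @ ys) d)"
    using path_Cons by simp
  also have "\<dots> \<longleftrightarrow> (\<exists>c1. ostep x c c1 \<and> (\<exists>c'. path c1 xs c' \<and> path c' ys d))"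
    using Cons.IH by simp
  also have "\<dots> \<longleftrightarrow> (\<exists>c'. (\<exists>c1. ostep x c c1 \<and> path c1 xs c') \<and> path c' ys d)" by blast
  also have "\<dots> \<longleftrightarrow> (\<exists>c'. path c (x # xs) c' \<and> path c' ys d)" using path_Cons by simp
  finally show ?case .
qed


definition minp :: "('q, 'a) conf \<Rightarrow> ('q, 'a) trans list \<Rightarrow> ('q, 'a) conf \<Rightarrow> bool" where
  "minp c \<tau>s d \<longleftrightarrow> path c \<tau>s d \<and> (\<forall>\<tau>s'. path c \<tau>s' d \<longrightarrow> length \<tau>s \<le> length \<tau>s')"

lemma minp_suffix:
  assumes "minp c (xs @ ys) d" "path c xs c'" "path c' ys d"
  shows "minp c' ys d"
  unfolding minp_def
proof (intro conjI allI impI)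
  show "path c' ys d" by fact
  fix ys' assume "path c' ys' d"
  then have "path c (xs @ ys') d" using assms(2) path_append by blast
  then show "length ys \<le> length ys'" using assms(1) unfolding minp_def by fastforce
qed

lemma minp_same: "minp c \<tau>s d \<Longrightarrow> path c \<tau>s' d \<Longrightarrow> length \<tau>s' = length \<tau>s \<Longrightarrow> minp c \<tau>s' d"
  unfolding minp_def by auto

lemma minp_noshort: "minp c \<tau>s d \<Longrightarrow> path c \<tau>s' d \<Longrightarrow> length \<tau>s' < length \<tau>s \<Longrightarrow> False"
  unfolding minp_def by fastforce

lemma teq_lists: "u \<approx> v \<Longrightarrow> u \<in> lists A \<Longrightarrow> v \<in> lists A"
  using teq_set by (metis in_listsI in_listsD)

inductive trk :: "'q \<Rightarrow> 'a list \<Rightarrow> 'a list \<Rightarrow> ('q, 'a) trans list \<Rightarrow> 'q \<Rightarrow> 'a list \<Rightarrow> 'a list \<Rightarrow> bool" where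
  tnil: "trk q t r [] q t r"
| tT: "(q, b, w, q2) \<in> \<Delta> \<Longrightarrow> t \<approx> b # t0 \<Longrightarrow> trk q2 (w @ t0) r \<sigma> q' t' r'
     \<Longrightarrow> trk q t r ((q, b, w, q2) # \<sigma>) q' t' r'"
| tR: "(q, b, w, q2) \<in> \<Delta> \<Longrightarrow> ind t [b] \<Longrightarrow> r \<approx> b # r0 \<Longrightarrow> trk q2 t (w @ r0) \<sigma> q' t' r'
     \<Longrightarrow> trk q t r ((q, b, w, q2) # \<sigma>) q' t' r'"

lemma trk_sound:
  "trk q t r \<sigma> q' t' r' \<Longrightarrow> t \<in> lists A \<Longrightarrow> r \<in> lists A \<Longrightarrow> path (q, tr D (t @ r)) \<sigma> (q', tr D (t' @ r'))"
proof (induction rule: trk.induct)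
  case (tnil q t r) then show ?case by simp
next
  case (tT q b w q2 t t0 r \<sigma> q' t' r')
  have "b # t0 \<in> lists A" using teq_lists[OF tT.hyps(2) tT.prems(1)] .
  then have t0: "t0 \<in> lists A" by simp
  have w: "w \<in> lists A" using DeltaA tT.hyps(1) by blast
  have "t @ r \<approx> b # (t0 @ r)" using teq_app[OF tT.hyps(2) teq_refl, of r] by simp
  moreover have "t0 @ r \<in> lists A" using t0 tT.prems(2) by simp
  ultimately have "ostep (q, b, w, q2) (q, tr D (t @ r)) (q2, tr D ((w @ t0) @ r))"
    using ostepI[OF tT.hyps(1), of "t0 @ r" "t @ r" "(w @ t0) @ r"] by simp
  moreover have "path (q2, tr D ((w @ t0) @ r)) \<sigma> (q', tr D (t' @ r'))"
    using tT.IH w t0 tT.prems(2) by simp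
  ultimately show ?case by (rule pcons)
next
  case (tR q b w q2 t r r0 \<sigma> q' t' r')
  have "b # r0 \<in> lists A" using teq_lists[OF tR.hyps(3) tR.prems(2)] .
  then have r0: "r0 \<in> lists A" by simp
  have w: "w \<in> lists A" using DeltaA tR.hyps(1) by blast
  have "t @ r \<approx> t @ b # r0" using teq_app[OF teq_refl tR.hyps(3)] by simp
  also have "t @ b # r0 \<approx> b # t @ r0" using move_front[OF tR.hyps(2)] .
  finally have 1: "t @ r \<approx> b # (t @ r0)" .
  have "w @ t \<approx> t @ w" using ind_commute[OF out_ind[OF tR.hyps(1) tR.hyps(2)]] .
  then have 2: "w @ t @ r0 \<approx> t @ w @ r0" using teq_app[OF _ teq_refl, of "w @ t" "t @ w" r0] by simp
  have "t @ r0 \<in> lists A" using r0 tR.prems(1) by simp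
  then have "ostep (q, b, w, q2) (q, tr D (t @ r)) (q2, tr D (t @ w @ r0))"
    using ostepI[OF tR.hyps(1) _ 1 teq_sym[OF 2]] by simp
  moreover have "path (q2, tr D (t @ w @ r0)) \<sigma> (q', tr D (t' @ r'))"
    using tR.IH w r0 tR.prems(1) by simp
  ultimately show ?case by (rule pcons)
qed

lemma trk_complete:
  "path (q, tr D (t @ r)) \<sigma> d \<Longrightarrow> t \<in> lists A \<Longrightarrow> r \<in> lists A
   \<Longrightarrow> \<exists>q' t' r'. trk q t r \<sigma> q' t' r' \<and> d = (q', tr D (t' @ r'))"
proof (induction \<sigma> arbitrary: q t r)
  case Nil
  then have "d = (q, tr D (t @ r))" by simp
  then show ?case using tnil by blast
next
  case (Cons \<tau> \<sigma>)
  from path_ConsD[OF Cons.prems(1)] obtain c' where st: "ostep \<tau> (q, tr D (t @ r)) c'" and pa: "path c' \<sigma> d"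
    by blast
  obtain p b w q2 where tau: "\<tau> = (p, b, w, q2)" by (cases \<tau>) auto
  have tl: "t @ r \<in> lists A" using Cons.prems by simp
  from st tl obtain x where x: "q = p" "(p, b, w, q2) \<in> \<Delta>" "x \<in> lists A" "t @ r \<approx> b # x"
    "c' = (q2, tr D (w @ x))" unfolding tau by (rule ostepE)
  have xd: "(q, b, w, q2) \<in> \<Delta>" using x by simp
  have w: "w \<in> lists A" using DeltaA x(2) by blast
  from first_letter[OF teq_sym[OF x(4)]] obtain U R where UR: "t @ r = U @ b # R" "ind U [b]" "x \<approx> U @ R"
    by blast
  from split2[OF UR(1)] show ?case
  proof (elim disjE exE conjE)
    fix t2 assume h: "t = U @ b # t2" "R = t2 @ r"
    have 1: "t \<approx> b # (U @ t2)" using move_front[OF UR(2)] h by simp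
    have "w @ x \<approx> w @ U @ t2 @ r" using teq_app[OF teq_refl UR(3)] h by simp
    then have "tr D (w @ x) = tr D ((w @ (U @ t2)) @ r)" using tr_eq_iff by simp
    then have cc: "c' = (q2, tr D ((w @ (U @ t2)) @ r))" using x(5) by simp
    have "(w @ (U @ t2)) \<in> lists A" using w h Cons.prems by simp
    then obtain q' t' r' where "trk q2 (w @ (U @ t2)) r \<sigma> q' t' r'" "d = (q', tr D (t' @ r'))"
      using Cons.IH[of q2 "w @ (U @ t2)" r] pa cc Cons.prems(3) by blast
    then show ?thesis unfolding tau x(1)[symmetric] using tT[OF xd 1] by blast
  next
    fix U2 assume h: "U = t @ U2" "r = U2 @ b # R"
    have it: "ind t [b]" and iu: "ind U2 [b]" using UR(2) h unfolding ind_def by auto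
    have 1: "r \<approx> b # (U2 @ R)" using move_front[OF iu] h by simp
    have "w @ x \<approx> w @ t @ U2 @ R" using teq_app[OF teq_refl UR(3)] h by simp
    also have "w @ t @ U2 @ R \<approx> t @ w @ U2 @ R"
      using ind_commute[OF out_ind[OF x(2) it]] teq_app[OF _ teq_refl, of "w @ t" "t @ w" "U2 @ R"] by simp
    finally have "tr D (w @ x) = tr D (t @ (w @ (U2 @ R)))" using tr_eq_iff by simp
    then have cc: "c' = (q2, tr D (t @ (w @ (U2 @ R))))" using x(5) by simp
    have "w @ (U2 @ R) \<in> lists A" using w h Cons.prems by simp
    then obtain q' t' r' where "trk q2 t (w @ (U2 @ R)) \<sigma> q' t' r'" "d = (q', tr D (t' @ r'))"
      using Cons.IH[of q2 t "w @ (U2 @ R)"] pa cc Cons.prems(2) by blast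
    then show ?thesis unfolding tau x(1)[symmetric] using tR[OF xd it 1] by blast
  qed
qed

lemma trk_cong:
  "trk q t r \<sigma> q' t' r' \<Longrightarrow> t \<approx> t2 \<Longrightarrow> \<exists>t2'. trk q t2 r \<sigma> q' t2' r' \<and> t2' \<approx> t'"
proof (induction arbitrary: t2 rule: trk.induct)
  case (tnil q t r)
  have "trk q t2 r [] q t2 r" by (rule trk.tnil)
  moreover have "t2 \<approx> t" using teq_sym[OF tnil.prems] .
  ultimately show ?case by blast
next
  case (tT q b w q2 t t0 r \<sigma> q' t' r')
  have "t2 \<approx> b # t0" using teq_trans[OF teq_sym[OF tT.prems] tT.hyps(2)] .
  from trk.tT[OF tT.hyps(1) this tT.hyps(3)] have "trk q t2 r ((q, b, w, q2) # \<sigma>) q' t' r'" .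
  then show ?case using teq_refl by blast
next
  case (tR q b w q2 t r r0 \<sigma> q' t' r')
  obtain t2' where h: "trk q2 t2 (w @ r0) \<sigma> q' t2' r'" "t2' \<approx> t'" using tR.IH[OF tR.prems] by blast
  have "set t2 = set t" using teq_set[OF tR.prems] by simp
  then have "ind t2 [b]" using tR.hyps(2) unfolding ind_def by simp
  from trk.tR[OF tR.hyps(1) this tR.hyps(3) h(1)] show ?case using h(2) by blast
qed

end

context tpds begin

inductive mpath :: "'a list \<Rightarrow> 'q \<Rightarrow> 'a list \<Rightarrow> ('q, 'a) trans list \<Rightarrow> 'q \<Rightarrow> 'a list \<Rightarrow> bool" for m where
  mnil: "mpath m q z [] q z"
| mcons: "(q, c, w, q2) \<in> \<Delta> \<Longrightarrow> ind m [c] \<Longrightarrow> z \<approx> c # z0 \<Longrightarrow> mpath m q2 (w @ z0) \<pi> q' z'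
     \<Longrightarrow> mpath m q z ((q, c, w, q2) # \<pi>) q' z'"

lemma mpath_sound:
  "mpath m q z \<pi> q' z' \<Longrightarrow> m \<in> lists A \<Longrightarrow> z \<in> lists A \<Longrightarrow> path (q, tr D (m @ z)) \<pi> (q', tr D (m @ z'))"
proof (induction rule: mpath.induct)
  case (mnil q z) then show ?case by simp
next
  case (mcons q c w q2 z z0 \<pi> q' z')
  have "c # z0 \<in> lists A" using teq_lists[OF mcons.hyps(3) mcons.prems(2)] .
  then have z0: "z0 \<in> lists A" by simp
  have w: "w \<in> lists A" using DeltaA mcons.hyps(1) by blast
  have "m @ z \<approx> m @ c # z0" using teq_app[OF teq_refl mcons.hyps(3)] by simp
  also have "m @ c # z0 \<approx> c # m @ z0" using move_front[OF mcons.hyps(2)] .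
  finally have 1: "m @ z \<approx> c # (m @ z0)" .
  have "w @ m \<approx> m @ w" using ind_commute[OF out_ind[OF mcons.hyps(1) mcons.hyps(2)]] .
  then have 2: "w @ m @ z0 \<approx> m @ w @ z0" using teq_app[OF _ teq_refl, of "w @ m" "m @ w" z0] by simp
  have "m @ z0 \<in> lists A" using z0 mcons.prems(1) by simp
  then have "ostep (q, c, w, q2) (q, tr D (m @ z)) (q2, tr D (m @ w @ z0))"
    using ostepI[OF mcons.hyps(1) _ 1 teq_sym[OF 2]] by simp
  moreover have "path (q2, tr D (m @ w @ z0)) \<pi> (q', tr D (m @ z'))"
    using mcons.IH w z0 mcons.prems(1) by simp
  ultimately show ?case by (rule pcons)
qed

lemma mpath_snoc:
  "mpath m q z \<pi> q1 z1 \<Longrightarrow> (q1, c, w, q2) \<in> \<Delta> \<Longrightarrow> ind m [c] \<Longrightarrow> z1 \<approx> c # z0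
   \<Longrightarrow> mpath m q z (\<pi> @ [(q1, c, w, q2)]) q2 (w @ z0)"
proof (induction rule: mpath.induct)
  case (mnil q z)
  have "mpath m q2 (w @ z0) [] q2 (w @ z0)" by (rule mpath.mnil)
  from mpath.mcons[OF mnil.prems this] show ?case by simp
next
  case (mcons q c' w' q2' z z0' \<pi> q' z')
  have "mpath m q2' (w' @ z0') (\<pi> @ [(q', c, w, q2)]) q2 (w @ z0)" using mcons.IH mcons.prems by blast
  from mpath.mcons[OF mcons.hyps(1,2,3) this] show ?case by simp
qed

lemma mpath_mono: "mpath m q z \<pi> q' z' \<Longrightarrow> set m' \<subseteq> set m \<Longrightarrow> mpath m' q z \<pi> q' z'"
proof (induction rule: mpath.induct)
  case (mnil q z) show ?case by (rule mpath.mnil)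
next
  case (mcons q c w q2 z z0 \<pi> q' z')
  have "ind m' [c]" using mcons.hyps(2) mcons.prems unfolding ind_def by blast
  from mpath.mcons[OF mcons.hyps(1) this mcons.hyps(3) mcons.IH[OF mcons.prems]] show ?case .
qed

lemma mpath_len: "mpath m q z \<pi> q' z' \<Longrightarrow> True" by simp

lemma pop_left:
  "mpath m q z \<pi> q' z' \<Longrightarrow> (q', b, [], q2) \<in> \<Delta> \<Longrightarrow> b \<in> set m
   \<Longrightarrow> \<exists>q1 \<pi>'. (q, b, [], q1) \<in> \<Delta> \<and> mpath m q1 z \<pi>' q2 z' \<and> length \<pi>' = length \<pi>"
proof (induction rule: mpath.induct)
  case (mnil q z)
  have "mpath m q2 z [] q2 z" by (rule mpath.mnil)
  then show ?case using mnil.prems(1) by fastforce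
next
  case (mcons q c w q3 z z0 \<pi> q' z')
  obtain q4 \<pi>' where h: "(q3, b, [], q4) \<in> \<Delta>" "mpath m q4 (w @ z0) \<pi>' q2 z'" "length \<pi>' = length \<pi>"
    using mcons.IH mcons.prems by blast
  have cb: "(c, b) \<notin> D"
  proof
    assume "(c, b) \<in> D"
    then have "(b, c) \<in> D" using sD unfolding sym_def by blast
    then show False using mcons.hyps(2) mcons.prems(2) unfolding ind_def by simp
  qed
  have wb: "ind w [b]"
    unfolding ind_def
  proof (intro ballI)
    fix x y assume "x \<in> set w" "y \<in> set [b]"
    show "(x, y) \<notin> D"
    proof
      assume "(x, y) \<in> D"
      then have "(c, b) \<in> D" using P1'[OF mcons.hyps(1) \<open>x \<in> set w\<close>] \<open>y \<in> set [b]\<close> by simp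
      then show False using cb by simp
    qed
  qed
  have "ind (c # w) (b # [])" using cb wb unfolding ind_def by simp
  from P2[OF mcons.hyps(1) h(1) this] obtain q5 where q5: "(q, b, [], q5) \<in> \<Delta>" "(q5, c, w, q4) \<in> \<Delta>"
    by blast
  have "mpath m q5 z ((q5, c, w, q4) # \<pi>') q2 z'"
    by (rule mpath.mcons[OF q5(2) mcons.hyps(2) mcons.hyps(3) h(2)])
  then show ?case using q5(1) h(3) by fastforce
qed

lemma trk_NilD: "trk q t r [] q' t' r' \<Longrightarrow> q' = q \<and> t' = t \<and> r' = r"
  by (erule trk.cases) auto

lemma trk_ConsD: "trk q t r (h # \<sigma>) q' t' r' \<Longrightarrow> \<exists>b w q2. h = (q, b, w, q2) \<and> (q, b, w, q2) \<in> \<Delta> \<and>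
   ((\<exists>t0. t \<approx> b # t0 \<and> trk q2 (w @ t0) r \<sigma> q' t' r') \<or>
    (\<exists>r0. ind t [b] \<and> r \<approx> b # r0 \<and> trk q2 t (w @ r0) \<sigma> q' t' r'))"
  by (erule trk.cases) blast+

lemma ostep_first: "(p, a, w, q) \<in> \<Delta> \<Longrightarrow> x \<in> lists A \<Longrightarrow> path (p, tr D (a # x)) [(p, a, w, q)] (q, tr D (w @ x))"
  using ostepI[of p a w q x "a # x" "w @ x"] path_single by simp

lemma shorten:
  "trk q mt r \<sigma> q' t' r' \<Longrightarrow> t' = [] \<Longrightarrow> mt = m @ t \<Longrightarrow> m \<noteq> [] \<Longrightarrow> (p0, a, m, q1) \<in> \<Delta>
   \<Longrightarrow> mpath m q1 x0 \<pi> q z \<Longrightarrow> z \<approx> t @ r \<Longrightarrow> x0 \<in> lists A \<Longrightarrow> z \<in> lists A \<Longrightarrow> t \<in> lists A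
   \<Longrightarrow> r \<in> lists A
   \<Longrightarrow> \<exists>\<tau>s. path (p0, tr D (a # x0)) \<tau>s (q', tr D r') \<and> length \<tau>s \<le> length \<pi> + length \<sigma>"
proof (induction \<sigma> arbitrary: q mt r m t p0 a q1 x0 \<pi> z t')
  case Nil
  then have "m @ t = []" using trk_NilD by blast
  then show ?case using Nil.prems(4) by simp
next
  case (Cons h \<sigma>)
  note tk = Cons.prems(1)[unfolded Cons.prems(2,3)]
  have mA: "m \<in> lists A" and aA: "a \<in> A" using DeltaA[OF Cons.prems(5)] by auto
  from trk_ConsD[OF tk] obtain b w q2 where h: "h = (q, b, w, q2)" and hd: "(q, b, w, q2) \<in> \<Delta>" and
    cs: "(\<exists>t0. m @ t \<approx> b # t0 \<and> trk q2 (w @ t0) r \<sigma> q' [] r') \<or>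
         (\<exists>r0. ind (m @ t) [b] \<and> r \<approx> b # r0 \<and> trk q2 (m @ t) (w @ r0) \<sigma> q' [] r')" by blast
  have wA: "w \<in> lists A" and bA: "b \<in> A" using DeltaA[OF hd] by auto
  from cs show ?case
  proof (elim disjE exE conjE)
    fix t0 assume t0: "m @ t \<approx> b # t0" and tk2: "trk q2 (w @ t0) r \<sigma> q' [] r'"
    from first_letter[OF teq_sym[OF t0]] obtain U R where UR: "m @ t = U @ b # R" "ind U [b]" "t0 \<approx> U @ R"
      by blast
    have t0A: "t0 \<in> lists A"
    proof -
      have "U @ R \<in> lists A" using UR(1) mA Cons.prems(10) by (metis append_in_lists_conv lists.simps Cons_in_lists_iff)
      then show ?thesis using teq_lists[OF teq_sym[OF UR(3)]] by blast
    qed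
    from split2[OF UR(1)] show ?thesis
    proof (elim disjE exE conjE)
      fix m2 assume mm: "m = U @ b # m2" "R = m2 @ t"
      have UA: "U \<in> lists A" and m2A: "m2 \<in> lists A" using mA mm by auto
      show ?thesis
      proof (cases "w = []")
        case True
        have hd0: "(q, b, [], q2) \<in> \<Delta>" using hd True by simp
        have bm: "b \<in> set m" using mm by simp
        from pop_left[OF Cons.prems(6) hd0 bm] obtain q1' \<pi>' where
          pl: "(q1, b, [], q1') \<in> \<Delta>" "mpath m q1' x0 \<pi>' q2 z" "length \<pi>' = length \<pi>" by blast
        have sd: "(p0, a, U @ m2, q1') \<in> \<Delta>"
          using SAT[of p0 a U b m2 q1 q1'] Cons.prems(5) mm(1) pl(1) UR(2) by simp
        have "set (U @ m2) \<subseteq> set m" using mm(1) by auto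
        then have mp: "mpath (U @ m2) q1' x0 \<pi>' q2 z" using mpath_mono[OF pl(2)] by blast
        have t0e: "t0 \<approx> (U @ m2) @ t" using UR(3) mm(2) by simp
        from trk_cong[OF tk2[unfolded True, simplified] t0e] obtain t2' where
          tk3: "trk q2 ((U @ m2) @ t) r \<sigma> q' t2' r'" "t2' \<approx> []" by blast
        have t2'0: "t2' = []" using teq_Nil[OF tk3(2)] .
        show ?thesis
        proof (cases "U @ m2 = []")
          case True
          have p1: "path (p0, tr D (a # x0)) [(p0, a, [], q1')] (q1', tr D x0)"
            using ostep_first[OF sd[unfolded True] Cons.prems(8)] by simp
          have p2: "path (q1', tr D x0) \<pi>' (q2, tr D z)"
            using mpath_sound[OF mp[unfolded True] _ Cons.prems(8)] by simp
          have p3: "path (q2, tr D (t @ r)) \<sigma> (q', tr D r')"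
            using trk_sound[OF tk3(1)[unfolded True t2'0, simplified] Cons.prems(10,11)] by simp
          have "tr D z = tr D (t @ r)" using Cons.prems(7) tr_eq_iff by simp
          then have "path (p0, tr D (a # x0)) ([(p0, a, [], q1')] @ \<pi>' @ \<sigma>) (q', tr D r')"
            using p1 p2 p3 path_append by metis
          moreover have "length ([(p0, a, [], q1')] @ \<pi>' @ \<sigma>) \<le> length \<pi> + length (h # \<sigma>)"
            using pl(3) by simp
          ultimately show ?thesis by blast
        next
          case False
          have "\<exists>\<tau>s. path (p0, tr D (a # x0)) \<tau>s (q', tr D r') \<and> length \<tau>s \<le> length \<pi>' + length \<sigma>"
            using Cons.IH[OF tk3(1) t2'0 refl False sd mp Cons.prems(7,8,9,10,11)] .
          then show ?thesis using pl(3) by fastforce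
        qed
      next
        case False
        define X where "X = U @ m2 @ z"
        have XA: "X \<in> lists A" using UA m2A Cons.prems(9) X_def by simp
        have "t0 @ r \<approx> (U @ R) @ r" using teq_app[OF UR(3) teq_refl] .
        also have "(U @ R) @ r = (U @ m2) @ (t @ r)" using mm(2) by simp
        also have "(U @ m2) @ (t @ r) \<approx> (U @ m2) @ z" using teq_app[OF teq_refl teq_sym[OF Cons.prems(7)]] .
        finally have Xe: "X \<approx> t0 @ r" unfolding X_def using teq_sym by simp
        have "\<exists>\<tau>s. path (q, tr D (b # X)) \<tau>s (q', tr D r') \<and> length \<tau>s \<le> length ([] :: ('q, 'a) trans list) + length \<sigma>"
          using Cons.IH[OF tk2 refl refl False hd mpath.mnil Xe XA XA t0A Cons.prems(11)] .
        then obtain \<tau>s where ts: "path (q, tr D (b # X)) \<tau>s (q', tr D r')" "length \<tau>s \<le> length \<sigma>" by auto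
        have p1: "path (p0, tr D (a # x0)) [(p0, a, m, q1)] (q1, tr D (m @ x0))"
          using ostep_first[OF Cons.prems(5) Cons.prems(8)] .
        have p2: "path (q1, tr D (m @ x0)) \<pi> (q, tr D (m @ z))"
          using mpath_sound[OF Cons.prems(6) mA Cons.prems(8)] .
        have "m @ z \<approx> b # X" using move_front[OF UR(2), of "m2 @ z"] mm(1) X_def by simp
        then have "tr D (m @ z) = tr D (b # X)" using tr_eq_iff by simp
        then have "path (p0, tr D (a # x0)) ([(p0, a, m, q1)] @ \<pi> @ \<tau>s) (q', tr D r')"
          using p1 p2 ts(1) path_append by metis
        moreover have "length ([(p0, a, m, q1)] @ \<pi> @ \<tau>s) \<le> length \<pi> + length (h # \<sigma>)"
          using ts(2) by simp
        ultimately show ?thesis by blast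
      qed
    next
      fix U2 assume uu: "U = m @ U2" "t = U2 @ b # R"
      have imb: "ind m [b]" and iu2: "ind U2 [b]" using UR(2) uu(1) unfolding ind_def by auto
      have U2A: "U2 \<in> lists A" and RA: "R \<in> lists A" using Cons.prems(10) uu(2) by auto
      have "z \<approx> t @ r" by (rule Cons.prems(7))
      also have "t @ r = U2 @ b # (R @ r)" using uu(2) by simp
      also have "U2 @ b # (R @ r) \<approx> b # (U2 @ R @ r)" using move_front[OF iu2] .
      finally have ze: "z \<approx> b # (U2 @ R @ r)" .
      have mp: "mpath m q1 x0 (\<pi> @ [(q, b, w, q2)]) q2 (w @ (U2 @ R @ r))"
        using mpath_snoc[OF Cons.prems(6) hd imb ze] .
      have "w @ t0 \<approx> w @ (U @ R)" using teq_app[OF teq_refl UR(3)] .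
      also have "w @ (U @ R) = (w @ m) @ (U2 @ R)" using uu(1) by simp
      also have "(w @ m) @ (U2 @ R) \<approx> (m @ w) @ (U2 @ R)"
        using teq_app[OF ind_commute[OF out_ind[OF hd imb]] teq_refl] .
      finally have we: "w @ t0 \<approx> m @ (w @ U2 @ R)" by simp
      from trk_cong[OF tk2 we] obtain t2' where tk3: "trk q2 (m @ (w @ U2 @ R)) r \<sigma> q' t2' r'" "t2' \<approx> []"
        by blast
      have t2'0: "t2' = []" using teq_Nil[OF tk3(2)] .
      have ze2: "w @ (U2 @ R @ r) \<approx> (w @ U2 @ R) @ r" by simp
      have "\<exists>\<tau>s. path (p0, tr D (a # x0)) \<tau>s (q', tr D r') \<and> length \<tau>s \<le> length (\<pi> @ [(q, b, w, q2)]) + length \<sigma>"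
        using Cons.IH[OF tk3(1) t2'0 refl Cons.prems(4) Cons.prems(5) mp ze2 Cons.prems(8)] wA U2A RA Cons.prems(11)
        by simp
      then show ?thesis by simp
    qed
  next
    fix r0 assume it: "ind (m @ t) [b]" and r0: "r \<approx> b # r0" and tk2: "trk q2 (m @ t) (w @ r0) \<sigma> q' [] r'"
    have imb: "ind m [b]" and itb: "ind t [b]" using it unfolding ind_def by auto
    have r0A: "r0 \<in> lists A" using teq_lists[OF r0 Cons.prems(11)] by simp
    have "z \<approx> t @ r" by (rule Cons.prems(7))
    also have "t @ r \<approx> t @ b # r0" using teq_app[OF teq_refl r0] .
    also have "t @ b # r0 \<approx> b # (t @ r0)" using move_front[OF itb] .
    finally have ze: "z \<approx> b # (t @ r0)" .
    have mp: "mpath m q1 x0 (\<pi> @ [(q, b, w, q2)]) q2 (w @ (t @ r0))"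
      using mpath_snoc[OF Cons.prems(6) hd imb ze] .
    have "w @ t \<approx> t @ w" using ind_commute[OF out_ind[OF hd itb]] .
    then have ze2: "w @ (t @ r0) \<approx> t @ (w @ r0)" using teq_app[OF _ teq_refl, of "w @ t" "t @ w" r0] by simp
    have "\<exists>\<tau>s. path (p0, tr D (a # x0)) \<tau>s (q', tr D r') \<and> length \<tau>s \<le> length (\<pi> @ [(q, b, w, q2)]) + length \<sigma>"
      using Cons.IH[OF tk2 refl refl Cons.prems(4) Cons.prems(5) mp ze2 Cons.prems(8)] wA r0A Cons.prems(10)
      by simp
    then show ?thesis by simp
  qed
qed

end

context tpds begin

definition PP :: "'a \<Rightarrow> 'a \<Rightarrow> bool" where
  "PP a0 z \<longleftrightarrow> Dl z \<subseteq> Dl a0 \<and> Dl z \<noteq> Dl a0"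

lemma trk_inv:
  "trk q t r \<sigma> q' t' r' \<Longrightarrow> (\<forall>z\<in>set t. Q0 z)
   \<Longrightarrow> (\<And>p b w p' z. Q0 b \<Longrightarrow> (p, b, w, p') \<in> \<Delta> \<Longrightarrow> z \<in> set w \<Longrightarrow> Q0 z)
   \<Longrightarrow> \<forall>z\<in>set t'. Q0 z"
proof (induction rule: trk.induct)
  case (tnil q t r) then show ?case by simp
next
  case (tT q b w q2 t t0 r \<sigma> q' t' r')
  have st: "set t = set (b # t0)" using teq_set[OF tT.hyps(2)] .
  have "\<forall>z\<in>set (w @ t0). Q0 z"
  proof
    fix z assume "z \<in> set (w @ t0)"
    then have "z \<in> set w \<or> z \<in> set t0" by simp
    then show "Q0 z"
    proof (elim disjE)
      assume "z \<in> set w"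
      moreover have "Q0 b" using tT.prems(1) st by simp
      ultimately show "Q0 z" using tT.prems(2) tT.hyps(1) by blast
    next
      assume "z \<in> set t0" then show "Q0 z" using tT.prems(1) st by simp
    qed
  qed
  then show ?case using tT.IH tT.prems(2) by blast
next
  case (tR q b w q2 t r r0 \<sigma> q' t' r')
  then show ?case by blast
qed

lemma trk_lists:
  "trk q t r \<sigma> q' t' r' \<Longrightarrow> t \<in> lists A \<Longrightarrow> r \<in> lists A \<Longrightarrow> t' \<in> lists A \<and> r' \<in> lists A"
proof (induction rule: trk.induct)
  case (tnil q t r) then show ?case by simp
next
  case (tT q b w q2 t t0 r \<sigma> q' t' r')
  have "b # t0 \<in> lists A" using teq_lists[OF tT.hyps(2) tT.prems(1)] .
  moreover have "w \<in> lists A" using DeltaA tT.hyps(1) by blast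
  ultimately show ?case using tT.IH tT.prems(2) by simp
next
  case (tR q b w q2 t r r0 \<sigma> q' t' r')
  have "b # r0 \<in> lists A" using teq_lists[OF tR.hyps(3) tR.prems(2)] .
  moreover have "w \<in> lists A" using DeltaA tR.hyps(1) by blast
  ultimately show ?case using tR.IH tR.prems(1) by simp
qed

lemma path_Delta: "path c \<tau>s d \<Longrightarrow> \<tau> \<in> set \<tau>s \<Longrightarrow> \<tau> \<in> \<Delta>"
proof (induction rule: path.induct)
  case (pnil c) then show ?case by simp
next
  case (pcons \<tau>' c c' \<tau>s d)
  then show ?case unfolding ostep_def by auto
qed

lemma ostep_def2:
  assumes "ostep (p, a, w, q) c c'"
  obtains x where "(p, a, w, q) \<in> \<Delta>" "x \<in> lists A" "c = (p, tr D (a # x))" "c' = (q, tr D (w @ x))"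
  using assms unfolding ostep_def by blast

lemma dead:
  assumes mp: "minp c ((p, y, v, q) # \<sigma>) d" and v: "v \<noteq> []" and P: "\<forall>z\<in>set v. PP a0 z"
    and e: "(p', e, w', q'') \<in> set \<sigma>"
  shows "Dl e \<noteq> Dl a0"
proof
  assume eq: "Dl e = Dl a0"
  have pa: "path c ((p, y, v, q) # \<sigma>) d" using mp unfolding minp_def by blast
  from path_ConsD[OF pa] obtain c1 where st: "ostep (p, y, v, q) c c1" and pa1: "path c1 \<sigma> d" by blast
  from st obtain x where x: "(p, y, v, q) \<in> \<Delta>" "x \<in> lists A" "c = (p, tr D (y # x))" "c1 = (q, tr D (v @ x))"
    by (rule ostep_def2)
  have vA: "v \<in> lists A" using DeltaA x(1) by blast
  from e obtain \<sigma>1 \<sigma>2 where sp: "\<sigma> = \<sigma>1 @ (p', e, w', q'') # \<sigma>2" using split_list by metis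
  from pa1[unfolded sp] path_append obtain c2 where p1: "path c1 \<sigma>1 c2" and p2: "path c2 ((p', e, w', q'') # \<sigma>2) d"
    by blast
  from path_ConsD[OF p2] obtain c3 where st2: "ostep (p', e, w', q'') c2 c3" and p3: "path c3 \<sigma>2 d" by blast
  from trk_complete[OF p1[unfolded x(4)] vA x(2)] obtain q3 t1 r1 where
    tk: "trk q v x \<sigma>1 q3 t1 r1" and c2: "c2 = (q3, tr D (t1 @ r1))" by blast
  have inv: "\<forall>z\<in>set t1. PP a0 z \<and> z \<in> A"
  proof (rule trk_inv[OF tk])
    show "\<forall>z\<in>set v. PP a0 z \<and> z \<in> A" using P vA by auto
  next
    fix pp b w p2 z assume h: "PP a0 b \<and> b \<in> A" "(pp, b, w, p2) \<in> \<Delta>" "z \<in> set w"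
    have 1: "Dl z \<subseteq> Dl b" using P1[OF h(2) h(3)] .
    have "Dl z \<subseteq> Dl a0" using 1 h(1) unfolding PP_def by blast
    moreover have "Dl z \<noteq> Dl a0" using 1 h(1) unfolding PP_def by blast
    moreover have "z \<in> A" using DeltaA[OF h(2)] h(3) by auto
    ultimately show "PP a0 z \<and> z \<in> A" unfolding PP_def by blast
  qed
  have r1A: "r1 \<in> lists A" and t1A: "t1 \<in> lists A" using trk_lists[OF tk vA x(2)] by auto
  show False
  proof (cases "t1 = []")
    case True
    from shorten[OF tk True, of v "[]" p y q x "[]" x] v x(1) x(2)
    obtain \<tau>s where ts: "path (p, tr D (y # x)) \<tau>s (q3, tr D r1)" "length \<tau>s \<le> length \<sigma>1"
      using mpath.mnil r1A by fastforce
    have "path c (\<tau>s @ (p', e, w', q'') # \<sigma>2) d"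
      using ts(1) p2 c2 True x(3) path_append by auto
    moreover have "length (\<tau>s @ (p', e, w', q'') # \<sigma>2) < length ((p, y, v, q) # \<sigma>)"
      using ts(2) sp by simp
    ultimately show False using minp_noshort[OF mp] by blast
  next
    case False
    have "t1 @ r1 \<in> lists A" using t1A r1A by simp
    from ostepE[OF st2[unfolded c2] this] obtain x2 where "t1 @ r1 \<approx> e # x2" by blast
    from first_letter[OF teq_sym[OF this]] obtain U R where UR: "t1 @ r1 = U @ e # R" "ind U [e]" by blast
    from split2[OF UR(1)] show False
    proof (elim disjE exE conjE)
      fix t2 assume "t1 = U @ e # t2"
      then have "PP a0 e" using inv by simp
      then show False using eq unfolding PP_def by simp
    next
      fix U2 assume h: "U = t1 @ U2"
      obtain z0 where z0: "z0 \<in> set t1" using False by (cases t1) auto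
      have "PP a0 z0" "z0 \<in> A" using inv z0 by auto
      then have "z0 \<in> Dl a0" using reflD unfolding PP_def Dset_def by blast
      then have "(e, z0) \<in> D" using eq unfolding Dset_def by blast
      then have "(z0, e) \<in> D" using sD unfolding sym_def by blast
      then show False using UR(2) h z0 unfolding ind_def by auto
    qed
  qed
qed

end

context tpds begin

lemma local2:
  assumes f: "ostep (p, a, v, q) c c1" and g: "ostep (q', b, w, r) c1 c2" and v: "v \<noteq> []"
    and k: "w = [] \<or> Dl b \<noteq> Dl a"
  shows "(\<exists>\<tau>. ostep \<tau> c c2) \<or> (\<exists>q'' c1'. ostep (p, b, w, q'') c c1' \<and> ostep (q'', a, v, r) c1' c2)
    \<or> (w \<noteq> [] \<and> (\<forall>z\<in>set w. PP a z)) \<or> (\<forall>z\<in>set v. PP a z)"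
proof -
  from f obtain x where x: "(p, a, v, q) \<in> \<Delta>" "x \<in> lists A" "c = (p, tr D (a # x))" "c1 = (q, tr D (v @ x))"
    by (rule ostep_def2)
  have vA: "v \<in> lists A" and aA: "a \<in> A" using DeltaA x(1) by auto
  have vx: "v @ x \<in> lists A" using vA x(2) by simp
  from ostepE[OF g[unfolded x(4)] vx] obtain x2 where
    y: "q = q'" "(q', b, w, r) \<in> \<Delta>" "x2 \<in> lists A" "v @ x \<approx> b # x2" "c2 = (r, tr D (w @ x2))" by blast
  have gd: "(q, b, w, r) \<in> \<Delta>" using y(1,2) by simp
  have wA: "w \<in> lists A" and bA: "b \<in> A" using DeltaA gd by auto
  from first_letter[OF teq_sym[OF y(4)]] obtain U R where UR: "v @ x = U @ b # R" "ind U [b]" "x2 \<approx> U @ R"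
    by blast
  from split2[OF UR(1)] show ?thesis
  proof (elim disjE exE conjE)
    fix v2 assume h: "v = U @ b # v2" "R = v2 @ x"
    show ?thesis
    proof (cases "w = []")
      case True
      have sd: "(p, a, U @ v2, r) \<in> \<Delta>" using SAT[of p a U b v2 q r] x(1) h(1) gd True UR(2) by simp
      have "w @ x2 \<approx> (U @ v2) @ x" using UR(3) h(2) True by simp
      then have "ostep (p, a, U @ v2, r) c c2"
        unfolding x(3) y(5) using ostepI[OF sd x(2) teq_refl] by simp
      then show ?thesis by blast
    next
      case False
      then have nd: "Dl b \<noteq> Dl a" using k by simp
      have ba: "Dl b \<subseteq> Dl a" using P1[OF x(1)] h(1) by simp
      have "\<forall>z\<in>set w. PP a z"
      proof
        fix z assume "z \<in> set w"
        then have zb: "Dl z \<subseteq> Dl b" using P1[OF gd] by blast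
        show "PP a z" unfolding PP_def using zb ba nd by blast
      qed
      then show ?thesis using False by blast
    qed
  next
    fix U2 assume h: "U = v @ U2" "x = U2 @ b # R"
    have ivb: "ind v [b]" and iu: "ind U2 [b]" using UR(2) h(1) unfolding ind_def by auto
    show ?thesis
    proof (cases "(a, b) \<in> D")
      case True
      have "\<forall>z\<in>set v. PP a z"
      proof
        fix z assume z: "z \<in> set v"
        then have za: "Dl z \<subseteq> Dl a" using P1[OF x(1)] by blast
        have "Dl z \<noteq> Dl a"
        proof
          assume "Dl z = Dl a"
          then have "b \<in> Dl z" using True unfolding Dset_def by blast
          then have "(z, b) \<in> D" unfolding Dset_def by blast
          then show False using ivb z unfolding ind_def by simp
        qed
        then show "PP a z" using za unfolding PP_def by blast
      qed
      then show ?thesis by blast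
    next
      case False
      have ba: "(b, a) \<notin> D" using False sD unfolding sym_def by blast
      have iwa: "ind w [a]"
        unfolding ind_def
      proof (intro ballI)
        fix z y assume z: "z \<in> set w" "y \<in> set [a]"
        show "(z, y) \<notin> D"
        proof
          assume "(z, y) \<in> D"
          then have "(b, a) \<in> D" using P1'[OF gd z(1)] z(2) by simp
          then show False using ba by simp
        qed
      qed
      have ivw: "ind v w"
        unfolding ind_def
      proof (intro ballI)
        fix z1 z2 assume z: "z1 \<in> set v" "z2 \<in> set w"
        show "(z1, z2) \<notin> D"
        proof
          assume "(z1, z2) \<in> D"
          then have "(z2, z1) \<in> D" using sD unfolding sym_def by blast
          then have "(b, z1) \<in> D" using P1'[OF gd z(2)] by simp
          then have "(z1, b) \<in> D" using sD unfolding sym_def by blast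
          then show False using ivb z(1) unfolding ind_def by simp
        qed
      qed
      have "ind (a # v) (b # w)"
        using False ivb iwa ivw sD unfolding ind_def sym_def by auto
      from P2[OF x(1) gd this] obtain q'' where q'': "(p, b, w, q'') \<in> \<Delta>" "(q'', a, v, r) \<in> \<Delta>" by blast
      have iab: "ind (a # U2) [b]" using False iu unfolding ind_def by simp
      have "a # x = (a # U2) @ b # R" using h(2) by simp
      also have "\<dots> \<approx> b # (a # U2) @ R" using move_front[OF iab] .
      finally have 1: "a # x \<approx> b # (a # U2 @ R)" by simp
      have aUR: "a # U2 @ R \<in> lists A" using aA x(2) h(2) by simp
      have st1: "ostep (p, b, w, q'') (p, tr D (a # x)) (q'', tr D (w @ a # U2 @ R))"
        using ostepI[OF q''(1) aUR 1 teq_refl] .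
      have 2: "w @ a # U2 @ R \<approx> a # (w @ U2 @ R)" using move_front[OF iwa] by simp
      have wUR: "w @ U2 @ R \<in> lists A" using wA x(2) h(2) by simp
      have "w @ x2 \<approx> w @ (v @ U2 @ R)" using teq_app[OF teq_refl UR(3)] h(1) by simp
      also have "w @ (v @ U2 @ R) = (w @ v) @ (U2 @ R)" by simp
      also have "\<dots> \<approx> (v @ w) @ (U2 @ R)"
        using teq_app[OF ind_commute[OF ivw[unfolded ind_sym[of v w]]] teq_refl] .
      finally have 3: "w @ x2 \<approx> v @ w @ U2 @ R" by simp
      have st2: "ostep (q'', a, v, r) (q'', tr D (w @ a # U2 @ R)) (r, tr D (w @ x2))"
        using ostepI[OF q''(2) wUR 2 3] .
      show ?thesis using st1 st2 x(3) y(5) by blast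
    qed
  qed
qed

end

context tpds begin

fun lbl :: "('q, 'a) trans \<Rightarrow> 'a \<times> 'a list" where
  "lbl (p, a, w, q) = (a, w)"

fun kindl :: "'a \<times> 'a list \<Rightarrow> 'a set option" where
  "kindl (a, w) = (if w = [] then None else Some (twins A D a))"

fun insl :: "'a set \<Rightarrow> 'a \<times> 'a list \<Rightarrow> ('a \<times> 'a list) list \<Rightarrow> ('a \<times> 'a list) list" where
  "insl T x [] = [x]"
| "insl T x (y # ys) = (if kindl y = Some T then x # y # ys else y # insl T x ys)"

lemma twins_eq: "a \<in> A \<Longrightarrow> e \<in> A \<Longrightarrow> twins A D e = twins A D a \<Longrightarrow> Dl e = Dl a"
  unfolding twins_def by blast

lemma push:
  "minp c (f # \<sigma>) d \<Longrightarrow> kindl (lbl f) = Some T \<Longrightarrow> (\<exists>\<tau>\<in>set \<sigma>. kindl (lbl \<tau>) = Some T)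
   \<Longrightarrow> \<exists>\<sigma>'. path c \<sigma>' d \<and> map lbl \<sigma>' = insl T (lbl f) (map lbl \<sigma>)"
proof (induction \<sigma> arbitrary: c f)
  case Nil then show ?case by simp
next
  case (Cons g \<sigma>)
  have pa: "path c (f # g # \<sigma>) d" using Cons.prems(1) unfolding minp_def by blast
  show ?case
  proof (cases "kindl (lbl g) = Some T")
    case True
    then show ?thesis using pa by auto
  next
    case gk: False
    obtain p a v q where fd: "f = (p, a, v, q)" by (cases f) auto
    obtain q' b w r where gd: "g = (q', b, w, r)" by (cases g) auto
    from pa obtain c1 c2 where s1: "ostep f c c1" and s2: "ostep g c1 c2" and p3: "path c2 \<sigma> d"
      using path_ConsD by blast
    have fD: "f \<in> \<Delta>" and gD: "g \<in> \<Delta>" using path_Delta[OF pa] by auto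
    have aA: "a \<in> A" and bA: "b \<in> A" using DeltaA fD gD fd gd by auto
    have v: "v \<noteq> []" and T: "T = twins A D a" using Cons.prems(2) fd by (auto split: if_splits)
    have k: "w = [] \<or> Dl b \<noteq> Dl a"
    proof (cases "w = []")
      case False
      then have "twins A D b \<noteq> twins A D a" using gk T gd by simp
      then show ?thesis using bA unfolding twins_def by blast
    qed simp
    from Cons.prems(3) gk obtain \<tau> where \<tau>: "\<tau> \<in> set \<sigma>" "kindl (lbl \<tau>) = Some T" by auto
    obtain p' e w' q'' where \<tau>d: "\<tau> = (p', e, w', q'')" by (cases \<tau>) auto
    have "\<tau> \<in> \<Delta>" using path_Delta[OF p3 \<tau>(1)] .
    then have eA: "e \<in> A" using DeltaA \<tau>d by auto
    have "twins A D e = twins A D a" using \<tau>(2) \<tau>d T by (auto split: if_splits)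
    then have eqD: "Dl e = Dl a" using twins_eq aA eA by blast
    from local2[OF s1[unfolded fd] s2[unfolded gd] v k] show ?thesis
    proof (elim disjE exE conjE)
      fix \<tau>' assume "ostep \<tau>' c c2"
      then have "path c (\<tau>' # \<sigma>) d" using p3 pcons by blast
      then show ?thesis using minp_noshort[OF Cons.prems(1)] by fastforce
    next
      fix q3 c1' assume sw: "ostep (p, b, w, q3) c c1'" "ostep (q3, a, v, r) c1' c2"
      have pa2: "path c ((p, b, w, q3) # (q3, a, v, r) # \<sigma>) d" using sw p3 pcons by blast
      then have "minp c ((p, b, w, q3) # (q3, a, v, r) # \<sigma>) d"
        using minp_same[OF Cons.prems(1)] by simp
      moreover have "path c [(p, b, w, q3)] c1'" using sw(1) path_single by blast
      moreover have "path c1' ((q3, a, v, r) # \<sigma>) d" using sw(2) p3 pcons by blast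
      ultimately have "minp c1' ((q3, a, v, r) # \<sigma>) d" using minp_suffix[of c "[(p, b, w, q3)]"] by simp
      moreover have "kindl (lbl (q3, a, v, r)) = Some T" using Cons.prems(2) fd by simp
      ultimately obtain \<sigma>3 where s3: "path c1' \<sigma>3 d" "map lbl \<sigma>3 = insl T (lbl (q3, a, v, r)) (map lbl \<sigma>)"
        using Cons.IH \<tau> by blast
      have "path c ((p, b, w, q3) # \<sigma>3) d" using sw(1) s3(1) pcons by blast
      moreover have "map lbl ((p, b, w, q3) # \<sigma>3) = insl T (lbl f) (map lbl (g # \<sigma>))"
        using s3(2) gk fd gd by simp
      ultimately show ?thesis by blast
    next
      assume "w \<noteq> []" "\<forall>z\<in>set w. PP a z"
      have "path c [f] c1" using s1 path_single by blast
      moreover have "path c1 (g # \<sigma>) d" using s2 p3 pcons by blast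
      ultimately have "minp c1 (g # \<sigma>) d" using minp_suffix[of c "[f]"] Cons.prems(1) by simp
      then have "Dl e \<noteq> Dl a" using dead[of c1 q' b w r \<sigma> d a p' e w' q''] \<open>w \<noteq> []\<close> \<open>\<forall>z\<in>set w. PP a z\<close>
        \<tau>(1) \<tau>d gd by simp
      then show ?thesis using eqD by simp
    next
      assume "\<forall>z\<in>set v. PP a z"
      have "Dl e \<noteq> Dl a" using dead[of c p a v q "g # \<sigma>" d a p' e w' q''] Cons.prems(1) fd v
        \<open>\<forall>z\<in>set v. PP a z\<close> \<tau>(1) \<tau>d by simp
      then show ?thesis using eqD by simp
    qed
  qed
qed

end

context tpds begin

fun nf :: "'a set list \<Rightarrow> ('a \<times> 'a list) list \<Rightarrow> bool" where
  "nf [] ls \<longleftrightarrow> (\<forall>l\<in>set ls. kindl l = None)"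
| "nf (T # Ts) ls \<longleftrightarrow> (\<exists>e t r. ls = e @ t @ r \<and> (\<forall>l\<in>set e. kindl l = None) \<and> t \<noteq> []
      \<and> (\<forall>l\<in>set t. kindl l = Some T) \<and> nf Ts r)"

lemma nf_eps: "kindl x = None \<Longrightarrow> nf Ts ls \<Longrightarrow> nf Ts (x # ls)"
proof (cases Ts)
  case Nil
  assume "kindl x = None" "nf Ts ls" then show ?thesis using Nil by simp
next
  case (Cons T Ts')
  assume h: "kindl x = None" "nf Ts ls"
  then obtain e t r where "ls = e @ t @ r" "\<forall>l\<in>set e. kindl l = None" "t \<noteq> []"
      "\<forall>l\<in>set t. kindl l = Some T" "nf Ts' r" using Cons by auto
  then have "x # ls = (x # e) @ t @ r \<and> (\<forall>l\<in>set (x # e). kindl l = None) \<and> t \<noteq> []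
      \<and> (\<forall>l\<in>set t. kindl l = Some T) \<and> nf Ts' r" using h(1) by simp
  then have "\<exists>e t r. x # ls = e @ t @ r \<and> (\<forall>l\<in>set e. kindl l = None) \<and> t \<noteq> []
      \<and> (\<forall>l\<in>set t. kindl l = Some T) \<and> nf Ts' r" by blast
  then show ?thesis using Cons by simp
qed

lemma nf_new: "kindl x = Some T \<Longrightarrow> nf Ts ls \<Longrightarrow> nf (T # Ts) (x # ls)"
proof -
  assume h: "kindl x = Some T" "nf Ts ls"
  then have "x # ls = [] @ [x] @ ls \<and> (\<forall>l\<in>set []. kindl l = None) \<and> [x] \<noteq> []
      \<and> (\<forall>l\<in>set [x]. kindl l = Some T) \<and> nf Ts ls" by simp
  then have "\<exists>e t r. x # ls = e @ t @ r \<and> (\<forall>l\<in>set e. kindl l = None) \<and> t \<noteq> []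
      \<and> (\<forall>l\<in>set t. kindl l = Some T) \<and> nf Ts r" by blast
  then show ?thesis by simp
qed

lemma insl_app: "(\<forall>l\<in>set e. kindl l \<noteq> Some T) \<Longrightarrow> insl T x (e @ ys) = e @ insl T x ys"
  by (induction e) auto

lemma nf_ins: "nf Ts ls \<Longrightarrow> distinct Ts \<Longrightarrow> T \<in> set Ts \<Longrightarrow> kindl x = Some T \<Longrightarrow> nf Ts (insl T x ls)"
proof (induction Ts arbitrary: ls)
  case Nil then show ?case by simp
next
  case (Cons T' Ts)
  from Cons.prems(1) obtain e t r where h: "ls = e @ t @ r" "\<forall>l\<in>set e. kindl l = None" "t \<noteq> []"
      "\<forall>l\<in>set t. kindl l = Some T'" "nf Ts r" by auto
  have ie: "insl T x (e @ t @ r) = e @ insl T x (t @ r)" using insl_app h(2) by simp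
  show ?case
  proof (cases "T = T'")
    case True
    obtain y t' where t: "t = y # t'" using h(3) by (cases t) auto
    have "insl T x (t @ r) = (x # t) @ r" using t h(4) True by simp
    then have 1: "insl T x ls = e @ (x # t) @ r" using ie h(1) by simp
    have "\<forall>l\<in>set (x # t). kindl l = Some T'" using h(4) Cons.prems(4) True by simp
    then have "\<exists>e' t' r'. insl T x ls = e' @ t' @ r' \<and> (\<forall>l\<in>set e'. kindl l = None) \<and> t' \<noteq> []
      \<and> (\<forall>l\<in>set t'. kindl l = Some T') \<and> nf Ts r'" using 1 h(2) h(5) by blast
    then show ?thesis by simp
  next
    case False
    have "insl T x (t @ r) = t @ insl T x r" using insl_app h(4) False by simp
    moreover have "nf Ts (insl T x r)" using Cons.IH[OF h(5)] Cons.prems False by simp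
    ultimately have "insl T x ls = e @ t @ insl T x r \<and> (\<forall>l\<in>set e. kindl l = None) \<and> t \<noteq> []
      \<and> (\<forall>l\<in>set t. kindl l = Some T') \<and> nf Ts (insl T x r)" using ie h by simp
    then have "\<exists>e' t' r'. insl T x ls = e' @ t' @ r' \<and> (\<forall>l\<in>set e'. kindl l = None) \<and> t' \<noteq> []
      \<and> (\<forall>l\<in>set t'. kindl l = Some T') \<and> nf Ts r'" by blast
    then show ?thesis by simp
  qed
qed

lemma nf_has: "nf Ts ls \<Longrightarrow> T \<in> set Ts \<Longrightarrow> \<exists>l\<in>set ls. kindl l = Some T"
proof (induction Ts arbitrary: ls)
  case Nil then show ?case by simp
next
  case (Cons T' Ts)
  from Cons.prems(1) obtain e t r where h: "ls = e @ t @ r" "t \<noteq> []"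
      "\<forall>l\<in>set t. kindl l = Some T'" "nf Ts r" by auto
  show ?case
  proof (cases "T = T'")
    case True
    obtain y t' where "t = y # t'" using h(2) by (cases t) auto
    then have "y \<in> set ls" "kindl y = Some T" using h(1) h(3) True by auto
    then show ?thesis by blast
  next
    case False
    then have "T \<in> set Ts" using Cons.prems(2) by simp
    from Cons.IH[OF h(4) this] obtain l where "l \<in> set r" "kindl l = Some T" by blast
    moreover have "set r \<subseteq> set ls" using h(1) by auto
    ultimately show ?thesis by blast
  qed
qed

lemma length_insl: "length (insl T x ls) = Suc (length ls)"
  by (induction ls) auto

lemma kind_twin: "(p, a, w, q) \<in> \<Delta> \<Longrightarrow> kindl (lbl (p, a, w, q)) = Some T \<Longrightarrow> T \<in> twin_classes A D"
  using DeltaA unfolding twin_classes_def by (auto split: if_splits)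

lemma nf_exists:
  "minp c \<tau>s d \<Longrightarrow> \<exists>\<tau>s' Ts. path c \<tau>s' d \<and> length \<tau>s' = length \<tau>s \<and> nf Ts (map lbl \<tau>s')
     \<and> distinct Ts \<and> set Ts \<subseteq> twin_classes A D"
proof (induction \<tau>s arbitrary: c)
  case Nil
  then have "path c [] d" unfolding minp_def by blast
  moreover have "nf [] (map lbl [])" by simp
  moreover have "distinct ([] :: 'a set list)" "set ([] :: 'a set list) \<subseteq> twin_classes A D" by simp_all
  ultimately show ?case by (intro exI[of _ "[]"] exI[of _ "[] :: 'a set list"]) simp
next
  case (Cons f \<tau>s)
  have pa: "path c (f # \<tau>s) d" using Cons.prems unfolding minp_def by blast
  from path_ConsD[OF pa] obtain c1 where s1: "ostep f c c1" and p1: "path c1 \<tau>s d" by blast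
  have "path c [f] c1" using s1 path_single by blast
  then have "minp c1 \<tau>s d" using minp_suffix[of c "[f]" \<tau>s d c1] Cons.prems p1 by simp
  from Cons.IH[OF this] obtain \<tau>s1 Ts where ih: "path c1 \<tau>s1 d" "length \<tau>s1 = length \<tau>s"
    "nf Ts (map lbl \<tau>s1)" "distinct Ts" "set Ts \<subseteq> twin_classes A D" by blast
  have pa2: "path c (f # \<tau>s1) d" using s1 ih(1) pcons by blast
  have mp2: "minp c (f # \<tau>s1) d" using minp_same[OF Cons.prems pa2] ih(2) by simp
  have fD: "f \<in> \<Delta>" using path_Delta[OF pa] by simp
  show ?case
  proof (cases "kindl (lbl f)")
    case None
    then have "nf Ts (map lbl (f # \<tau>s1))" using nf_eps ih(3) by simp
    moreover have "length (f # \<tau>s1) = length (f # \<tau>s)" using ih(2) by simp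
    ultimately show ?thesis using pa2 ih(4,5) by blast
  next
    case (Some T)
    obtain p a w q where fq: "f = (p, a, w, q)" by (cases f) auto
    have Ttw: "T \<in> twin_classes A D" using kind_twin[of p a w q T] fD Some fq by simp
    show ?thesis
    proof (cases "T \<in> set Ts")
      case False
      have "nf (T # Ts) (map lbl (f # \<tau>s1))" using nf_new[OF Some ih(3)] by simp
      moreover have "distinct (T # Ts)" "set (T # Ts) \<subseteq> twin_classes A D" using False ih Ttw by auto
      moreover have "length (f # \<tau>s1) = length (f # \<tau>s)" using ih(2) by simp
      ultimately show ?thesis using pa2 by blast
    next
      case True
      from nf_has[OF ih(3) True] have "\<exists>\<tau>\<in>set \<tau>s1. kindl (lbl \<tau>) = Some T" by auto
      from push[OF mp2 Some this] obtain \<sigma>' where s: "path c \<sigma>' d" "map lbl \<sigma>' = insl T (lbl f) (map lbl \<tau>s1)"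
        by blast
      have "nf Ts (map lbl \<sigma>')" using nf_ins[OF ih(3) ih(4) True Some] s(2) by simp
      moreover have "length \<sigma>' = length (f # \<tau>s)"
        using arg_cong[OF s(2), of length] length_insl ih(2) by simp
      ultimately show ?thesis using s(1) ih(4,5) by blast
    qed
  qed
qed

lemma ostep_step:
  "ostep \<tau> c c' \<Longrightarrow> \<tau> \<in> \<Delta>' \<Longrightarrow> (c, c') \<in> step A D \<Delta>'"
  unfolding ostep_def step_def by blast

lemma path_eps: "path c \<tau>s d \<Longrightarrow> (\<forall>l\<in>set (map lbl \<tau>s). kindl l = None) \<Longrightarrow> (c, d) \<in> (step A D (Delta_eps \<Delta>))\<^sup>*"
proof (induction rule: path.induct)
  case (pnil c) then show ?case by simp
next
  case (pcons \<tau> c c' \<tau>s d)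
  obtain p a w q where \<tau>: "\<tau> = (p, a, w, q)" by (cases \<tau>) auto
  have "\<tau> \<in> \<Delta>" using pcons.hyps(1) unfolding ostep_def by blast
  moreover have "w = []" using pcons.prems \<tau> by (auto split: if_splits)
  ultimately have "\<tau> \<in> Delta_eps \<Delta>" using \<tau> unfolding Delta_eps_def by simp
  then have "(c, c') \<in> step A D (Delta_eps \<Delta>)" using ostep_step pcons.hyps(1) by blast
  moreover have "(c', d) \<in> (step A D (Delta_eps \<Delta>))\<^sup>*" using pcons.IH pcons.prems by simp
  ultimately show ?case by (rule converse_rtrancl_into_rtrancl)
qed

lemma path_T: "path c \<tau>s d \<Longrightarrow> \<tau>s \<noteq> [] \<Longrightarrow> (\<forall>l\<in>set (map lbl \<tau>s). kindl l = Some T)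
   \<Longrightarrow> (c, d) \<in> (step A D (Delta_T \<Delta> T))\<^sup>+"
proof (induction rule: path.induct)
  case (pnil c) then show ?case by simp
next
  case (pcons \<tau> c c' \<tau>s d)
  obtain p a w q where \<tau>: "\<tau> = (p, a, w, q)" by (cases \<tau>) auto
  have tD: "\<tau> \<in> \<Delta>" using pcons.hyps(1) unfolding ostep_def by blast
  then have aA: "a \<in> A" using DeltaA \<tau> by auto
  have "w \<noteq> [] \<and> T = twins A D a" using pcons.prems \<tau> by (auto split: if_splits)
  moreover have "a \<in> twins A D a" using aA unfolding twins_def by simp
  ultimately have "\<tau> \<in> Delta_T \<Delta> T" using \<tau> tD unfolding Delta_T_def by simp
  then have st: "(c, c') \<in> step A D (Delta_T \<Delta> T)" using ostep_step pcons.hyps(1) by blast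
  show ?case
  proof (cases "\<tau>s = []")
    case True
    then have "c' = d" using pcons.hyps(2) by simp
    then show ?thesis using st by blast
  next
    case False
    then have "(c', d) \<in> (step A D (Delta_T \<Delta> T))\<^sup>+" using pcons.IH pcons.prems by simp
    with st show ?thesis by (rule trancl_into_trancl2)
  qed
qed

lemma nf_rel: "path c \<tau>s d \<Longrightarrow> nf Ts (map lbl \<tau>s) \<Longrightarrow> (c, d) \<in> VdashSeq A D \<Delta> Ts O (step A D (Delta_eps \<Delta>))\<^sup>*"
proof (induction Ts arbitrary: c \<tau>s)
  case Nil
  then show ?case using path_eps by auto
next
  case (Cons T Ts)
  from Cons.prems(2) obtain e t r where h: "map lbl \<tau>s = e @ t @ r" "\<forall>l\<in>set e. kindl l = None" "t \<noteq> []"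
      "\<forall>l\<in>set t. kindl l = Some T" "nf Ts r" by auto
  from h(1)[unfolded map_eq_append_conv] obtain \<tau>e \<tau>r' where
    s1': "\<tau>s = \<tau>e @ \<tau>r'" "e = map lbl \<tau>e" "t @ r = map lbl \<tau>r'" by blast
  then have s1: "\<tau>s = \<tau>e @ \<tau>r'" "map lbl \<tau>e = e" "map lbl \<tau>r' = t @ r" by simp_all
  from s1(3)[unfolded map_eq_append_conv] obtain \<tau>t \<tau>r where
    s2': "\<tau>r' = \<tau>t @ \<tau>r" "t = map lbl \<tau>t" "r = map lbl \<tau>r" by blast
  then have s2: "\<tau>r' = \<tau>t @ \<tau>r" "map lbl \<tau>t = t" "map lbl \<tau>r = r" by simp_all
  from Cons.prems(1) s1(1) s2(1) path_append obtain c1 c2 where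
    p: "path c \<tau>e c1" "path c1 \<tau>t c2" "path c2 \<tau>r d" by metis
  have 1: "(c, c1) \<in> (step A D (Delta_eps \<Delta>))\<^sup>*" using path_eps[OF p(1)] s1(2) h(2) by simp
  have "\<tau>t \<noteq> []" using s2(2) h(3) by auto
  then have 2: "(c1, c2) \<in> (step A D (Delta_T \<Delta> T))\<^sup>+" using path_T[OF p(2)] s2(2) h(4) by simp
  have 3: "(c2, d) \<in> VdashSeq A D \<Delta> Ts O (step A D (Delta_eps \<Delta>))\<^sup>*"
    using Cons.IH[OF p(3)] s2(3) h(5) by simp
  have "(c, c2) \<in> VdashT A D \<Delta> T" unfolding VdashT_def using 1 2 by blast
  then show ?case using 3 by auto
qed

lemma step_ostep: "(c, c') \<in> step A D \<Delta> \<Longrightarrow> \<exists>\<tau>. ostep \<tau> c c'"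
  unfolding ostep_def step_def by blast

lemma rtrancl_path: "(c, d) \<in> (step A D \<Delta>)\<^sup>* \<Longrightarrow> \<exists>\<tau>s. path c \<tau>s d"
proof (induction rule: rtrancl_induct)
  case base then show ?case using pnil by blast
next
  case (step y z)
  then obtain \<tau>s \<tau> where "path c \<tau>s y" "ostep \<tau> y z" using step_ostep by blast
  then have "path c (\<tau>s @ [\<tau>]) z" using path_append path_single by blast
  then show ?case by blast
qed

lemma minp_exists: "path c \<tau>s d \<Longrightarrow> \<exists>\<tau>s'. minp c \<tau>s' d"
proof -
  assume "path c \<tau>s d"
  then have "\<exists>n. \<exists>\<tau>s. path c \<tau>s d \<and> length \<tau>s = n" by blast
  then obtain n where n: "\<exists>\<tau>s. path c \<tau>s d \<and> length \<tau>s = n"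
    "\<forall>m<n. \<not> (\<exists>\<tau>s. path c \<tau>s d \<and> length \<tau>s = m)"
    using exists_least_iff[of "\<lambda>n. \<exists>\<tau>s. path c \<tau>s d \<and> length \<tau>s = n"] by blast
  then obtain \<tau>s' where "path c \<tau>s' d" "length \<tau>s' = n" by blast
  then have "minp c \<tau>s' d" unfolding minp_def using n(2) not_le by blast
  then show ?thesis by blast
qed

lemma main:
  "(c, d) \<in> (step A D \<Delta>)\<^sup>* \<Longrightarrow> \<exists>Ts. length Ts \<le> TI A D \<and> set Ts \<subseteq> twin_classes A D
           \<and> (c, d) \<in> VdashSeq A D \<Delta> Ts O (step A D (Delta_eps \<Delta>))\<^sup>*"
proof -
  assume "(c, d) \<in> (step A D \<Delta>)\<^sup>*"
  then obtain \<tau>s where "path c \<tau>s d" using rtrancl_path by blast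
  then obtain \<tau>s' where "minp c \<tau>s' d" using minp_exists by blast
  from nf_exists[OF this] obtain \<tau>s2 Ts where h: "path c \<tau>s2 d" "nf Ts (map lbl \<tau>s2)" "distinct Ts"
    "set Ts \<subseteq> twin_classes A D" by blast
  have fin: "finite (twin_classes A D)" using dep unfolding dep_alphabet_def twin_classes_def by simp
  have "length Ts = card (set Ts)" using h(3) distinct_card by metis
  also have "\<dots> \<le> card (twin_classes A D)" using card_mono[OF fin h(4)] .
  finally have "length Ts \<le> TI A D" unfolding TI_def .
  then show ?thesis using h nf_rel by blast
qed

end

theorem proposition5p11:
  fixes A :: "'a set" and D :: "('a \<times> 'a) set"
    and Q :: "'q set" and \<Delta> :: "('q \<times> 'a \<times> 'a list \<times> 'q) set"
    and c d :: "'q \<times> 'a list set"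
  assumes "dep_alphabet A D"
    and "trace_pds A D Q \<Delta>"
    and "saturated A D \<Delta>"
    and "c \<in> Q \<times> traces A D" and "d \<in> Q \<times> traces A D"
    and "(c, d) \<in> (step A D \<Delta>)\<^sup>*"
  shows "\<exists>Ts. length Ts \<le> TI A D \<and> set Ts \<subseteq> twin_classes A D
           \<and> (c, d) \<in> VdashSeq A D \<Delta> Ts O (step A D (Delta_eps \<Delta>))\<^sup>*"
proof -
  have "sym D" using assms(1) unfolding dep_alphabet_def by blast
  interpret tpds D A Q \<Delta>
    by (unfold_locales) (use assms \<open>sym D\<close> in auto)
  show ?thesis using main[OF assms(6)] .
qed

end
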